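(* Let $H$ be a graph with an $\ell$-colouring $\phi_2$ such that every $\phi_2$-repetitive lazy walk in $H$ is boring. Then for every graph $G$, $\pi^*(G\boxtimes H)\le \ell\,\pi^*(G)$.
   Context: All graphs are finite and simple. A lazy walk in a graph $G$ is a sequence of vertices $v_1,\dots,v_m$ such that for each $i<m$, either $v_iv_{i+1}\in E(G)$ or $v_i=v_{i+1}$. For a colouring $\phi$ of $V(G)$, a lazy walk $v_1,\dots,v_{2t}$ is $\phi$-repetitive if $\phi(v_i)=\phi(v_{i+t})$ for each $i\in\{1,\dots,t\}$; it is boring if $v_i=v_{i+t}$ for every $i\in\{1,\dots,t\}$. A colouring $\phi$ is strongly nonrepetitive if for every $\phi$-repetitive lazy walk $v_1,\dots,v_{2t}$ there exists $i\in\{1,\dots,t\}$ with $v_i=v_{i+t}$. $\pi^*(G)$ denotes the minimum number of colours in a strongly nonrepetitive colouring of $G$. The strong product $A\boxtimes B$ has vertex set $V(A)\times V(B)$, with distinct $(v,x),(w,y)$ adjacent iff ($v=w$ and $xy\in E(B)$) or ($x=y$ and $vw\in E(A)$) or ($vw\in E(A)$ and $xy\in E(B)$). *)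

theory Defs
  imports Main
begin

definition graph :: "'a set \<Rightarrow> ('a \<Rightarrow> 'a \<Rightarrow> bool) \<Rightarrow> bool" where
  "graph V E \<longleftrightarrow> finite V \<and>
     (\<forall>x y. E x y \<longrightarrow> x \<in> V \<and> y \<in> V \<and> x \<noteq> y \<and> E y x)"

text \<open>Lazy walk v_1..v_m (as a list, 0-indexed).\<close>
definition lazy_walk :: "'a set \<Rightarrow> ('a \<Rightarrow> 'a \<Rightarrow> bool) \<Rightarrow> 'a list \<Rightarrow> bool" where
  "lazy_walk V E ws \<longleftrightarrow> set ws \<subseteq> V \<and>
     (\<forall>i. Suc i < length ws \<longrightarrow> E (ws ! i) (ws ! Suc i) \<or> ws ! i = ws ! Suc i)"

definition repetitive :: "('a \<Rightarrow> 'c) \<Rightarrow> 'a list \<Rightarrow> bool" where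
  "repetitive \<phi> ws \<longleftrightarrow> (\<exists>t. t \<ge> 1 \<and> length ws = 2 * t \<and>
     (\<forall>i<t. \<phi> (ws ! i) = \<phi> (ws ! (i + t))))"

definition boring :: "'a list \<Rightarrow> bool" where
  "boring ws \<longleftrightarrow> (\<forall>i < length ws div 2. ws ! i = ws ! (i + length ws div 2))"

definition strongly_nonrepetitive :: "'a set \<Rightarrow> ('a \<Rightarrow> 'a \<Rightarrow> bool) \<Rightarrow> ('a \<Rightarrow> 'c) \<Rightarrow> bool" where
  "strongly_nonrepetitive V E \<phi> \<longleftrightarrow>
     (\<forall>ws. lazy_walk V E ws \<and> repetitive \<phi> ws \<longrightarrow>
        (\<exists>i < length ws div 2. ws ! i = ws ! (i + length ws div 2)))"

definition pi_star :: "'a set \<Rightarrow> ('a \<Rightarrow> 'a \<Rightarrow> bool) \<Rightarrow> nat" where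
  "pi_star V E = (LEAST k. \<exists>\<phi> :: 'a \<Rightarrow> nat.
      (\<forall>v\<in>V. \<phi> v < k) \<and> strongly_nonrepetitive V E \<phi>)"

definition strong_prod :: "('a \<Rightarrow> 'a \<Rightarrow> bool) \<Rightarrow> ('b \<Rightarrow> 'b \<Rightarrow> bool) \<Rightarrow>
    ('a \<times> 'b) \<Rightarrow> ('a \<times> 'b) \<Rightarrow> bool" where
  "strong_prod EA EB p q \<longleftrightarrow> p \<noteq> q \<and>
     ((fst p = fst q \<and> EB (snd p) (snd q)) \<or>
      (snd p = snd q \<and> EA (fst p) (fst q)) \<or>
      (EA (fst p) (fst q) \<and> EB (snd p) (snd q)))"

end

theory Submission
  imports Defs
begin

lemma enc_inj:
  fixes a b c d k :: nat
  assumes "a < k" "c < k" "a + k*b = c + k*d"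
  shows "a = c \<and> b = d"
proof -
  have "(a + k*b) mod k = a" "(c + k*d) mod k = c" using assms(1,2) by simp_all
  hence ac: "a = c" using assms(3) by simp
  have "k > 0" using assms by auto
  with ac assms(3) show ?thesis by auto
qed

lemma sn_exists:
  assumes "graph V E"
  shows "\<exists>k (\<phi>::'a \<Rightarrow> nat). (\<forall>v\<in>V. \<phi> v < k) \<and> strongly_nonrepetitive V E \<phi>"
proof -
  have "finite V" using assms unfolding graph_def by auto
  then obtain h where h: "bij_betw h V {0..<card V}" using ex_bij_betw_finite_nat by blast
  have "strongly_nonrepetitive V E h"
    unfolding strongly_nonrepetitive_def
  proof (intro allI impI)
    fix ws assume a: "lazy_walk V E ws \<and> repetitive h ws"
    then obtain t where t: "t \<ge> 1" "length ws = 2*t" "\<forall>i<t. h (ws ! i) = h (ws ! (i + t))"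
      unfolding repetitive_def by auto
    have s: "set ws \<subseteq> V" using a unfolding lazy_walk_def by auto
    have "ws ! 0 \<in> V" "ws ! (0 + t) \<in> V" using s t by auto
    moreover have "h (ws ! 0) = h (ws ! (0+t))" using t by auto
    ultimately have "ws ! 0 = ws ! (0 + t)" using h unfolding bij_betw_def inj_on_def by blast
    moreover have "length ws div 2 = t" using t by auto
    ultimately show "\<exists>i<length ws div 2. ws ! i = ws ! (i + length ws div 2)" using t by (auto intro!: exI[of _ 0])
  qed
  moreover have "\<forall>v\<in>V. h v < card V" using h unfolding bij_betw_def by auto
  ultimately show ?thesis by blast
qed

theorem mainTheorem6:
  fixes VG :: "'a set" and EG :: "'a \<Rightarrow> 'a \<Rightarrow> bool"
    and VH :: "'b set" and EH :: "'b \<Rightarrow> 'b \<Rightarrow> bool"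
    and \<phi>2 :: "'b \<Rightarrow> nat" and l :: nat
  assumes "graph VG EG" and "graph VH EH"
    and "\<forall>v\<in>VH. \<phi>2 v < l"
    and "\<forall>ws. lazy_walk VH EH ws \<and> repetitive \<phi>2 ws \<longrightarrow> boring ws"
  shows "pi_star (VG \<times> VH) (strong_prod EG EH) \<le> l * pi_star VG EG"
proof -
  define k where "k = pi_star VG EG"
  have "\<exists>\<phi>::'a \<Rightarrow> nat. (\<forall>v\<in>VG. \<phi> v < k) \<and> strongly_nonrepetitive VG EG \<phi>"
    unfolding k_def pi_star_def
    using sn_exists[OF assms(1)] by (rule LeastI_ex)
  then obtain \<phi>1 :: "'a \<Rightarrow> nat" where p1: "\<forall>v\<in>VG. \<phi>1 v < k" "strongly_nonrepetitive VG EG \<phi>1"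
    by blast
  define \<phi> where "\<phi> = (\<lambda>p. \<phi>1 (fst p) + k * \<phi>2 (snd p))"
  have bound: "\<forall>p\<in>VG \<times> VH. \<phi> p < l * k"
  proof
    fix p assume p: "p \<in> VG \<times> VH"
    have a: "\<phi>1 (fst p) < k" "\<phi>2 (snd p) < l" using p p1 assms(3) by auto
    hence "\<phi>2 (snd p) + 1 \<le> l" by auto
    hence "k * (\<phi>2 (snd p) + 1) \<le> k * l" by (rule mult_le_mono2)
    thus "\<phi> p < l * k" using a unfolding \<phi>_def by (simp add: algebra_simps)
  qed
  have sn: "strongly_nonrepetitive (VG \<times> VH) (strong_prod EG EH) \<phi>"
    unfolding strongly_nonrepetitive_def
  proof (intro allI impI)
    fix ws assume a: "lazy_walk (VG \<times> VH) (strong_prod EG EH) ws \<and> repetitive \<phi> ws"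
    then obtain t where t: "t \<ge> 1" "length ws = 2*t" "\<forall>i<t. \<phi> (ws ! i) = \<phi> (ws ! (i + t))"
      unfolding repetitive_def by auto
    have lw: "lazy_walk (VG \<times> VH) (strong_prod EG EH) ws" using a by auto
    have s: "set ws \<subseteq> VG \<times> VH" using lw unfolding lazy_walk_def by auto
    have lt: "length ws div 2 = t" using t by auto
    have eq: "\<phi>1 (fst (ws ! i)) = \<phi>1 (fst (ws ! (i+t))) \<and> \<phi>2 (snd (ws ! i)) = \<phi>2 (snd (ws ! (i+t)))"
      if "i < t" for i
    proof -
      have "ws ! i \<in> set ws" "ws ! (i+t) \<in> set ws" using that t by auto
      hence "fst (ws ! i) \<in> VG" "fst (ws ! (i+t)) \<in> VG" using s by auto
      thus ?thesis using enc_inj[of "\<phi>1 (fst (ws ! i))" k "\<phi>1 (fst (ws ! (i+t)))"] p1(1)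
        t(3) that unfolding \<phi>_def by auto
    qed
    have lwG: "lazy_walk VG EG (map fst ws)" "lazy_walk VH EH (map snd ws)"
      using lw unfolding lazy_walk_def strong_prod_def by auto
    have "repetitive \<phi>2 (map snd ws)" unfolding repetitive_def
      using t eq by (intro exI[of _ t]) auto
    hence "boring (map snd ws)" using assms(4) lwG by auto
    hence bs: "\<forall>i<t. snd (ws ! i) = snd (ws ! (i+t))" unfolding boring_def using t lt by auto
    have "repetitive \<phi>1 (map fst ws)" unfolding repetitive_def
      using t eq by (intro exI[of _ t]) auto
    hence "\<exists>i<length (map fst ws) div 2. map fst ws ! i = map fst ws ! (i + length (map fst ws) div 2)"
      using p1(2) lwG(1) unfolding strongly_nonrepetitive_def by blast
    then obtain i where i: "i < t" "fst (ws ! i) = fst (ws ! (i+t))"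
      using t lt by auto
    hence "ws ! i = ws ! (i+t)" using bs by (simp add: prod_eq_iff)
    thus "\<exists>i<length ws div 2. ws ! i = ws ! (i + length ws div 2)" using i lt by auto
  qed
  have "pi_star (VG \<times> VH) (strong_prod EG EH) \<le> l * k"
    unfolding pi_star_def
    by (rule Least_le) (use bound sn in blast)
  thus ?thesis by (simp add: k_def)
qed

end
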